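(* Let $m,n\ge1$ be integers. If $(x,y,z)\in\mathbb{C}^3$ satisfies $v(x,y,z)=-2$ and $nS_m(z)+(n+1)S_{m-1}(z)=0$, then $$z=(n^2+n)(x+y)^2+xy+2.$$ Hence the set of such points contains no point of the form $(2,2,z)$ with $z\notin\mathbb{R}$.
   Context: $S_k(q)$ are the Chebyshev polynomials defined for all integers $k$ by $S_0=1$, $S_1=q$, $S_{k+1}=qS_k-S_{k-1}$. Here $v(x,y,z)=\big(xS_m(z)-yS_{m-1}(z)\big)\big(yS_m(z)-xS_{m-1}(z)\big)-z\big(S_m^2(z)+S_{m-1}^2(z)\big)+4S_m(z)S_{m-1}(z)$. *)

theory Defs
  imports Complex_Main
begin

(* Chebyshev polynomials S_k(q) for natural k: S_0 = 1, S_1 = q, S_{k+1} = q S_k - S_{k-1}.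
   (The paper defines S_k for all integers k; only k >= 0 is used since m >= 1.) *)
fun cheb :: "nat \<Rightarrow> complex \<Rightarrow> complex" where
  "cheb 0 q = 1"
| "cheb (Suc 0) q = q"
| "cheb (Suc (Suc k)) q = q * cheb (Suc k) q - cheb k q"

definition vpoly :: "nat \<Rightarrow> complex \<Rightarrow> complex \<Rightarrow> complex \<Rightarrow> complex" where
  "vpoly m x y z =
     (x * cheb m z - y * cheb (m - 1) z) * (y * cheb m z - x * cheb (m - 1) z)
     - z * ((cheb m z)\<^sup>2 + (cheb (m - 1) z)\<^sup>2) + 4 * cheb m z * cheb (m - 1) z"

end

theory Submission
  imports Defs
begin

lemma cassini: "(cheb (Suc k) z)\<^sup>2 + (cheb k z)\<^sup>2 - z * cheb (Suc k) z * cheb k z = 1"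
proof (induction k)
  case 0 then show ?case by (simp add: power2_eq_square)
next
  case (Suc k)
  then show ?case by (simp add: power2_eq_square algebra_simps)
qed

lemma core:
  fixes a b x y z nn :: complex
  assumes K: "a\<^sup>2 + b\<^sup>2 - z * a * b = 1"
    and V: "(x * a - y * b) * (y * a - x * b) - z * (a\<^sup>2 + b\<^sup>2) + 4 * a * b = -2"
    and L: "nn * a + (nn + 1) * b = 0"
    and nz: "nn \<noteq> 0"
  shows "z = (nn\<^sup>2 + nn) * (x + y)\<^sup>2 + x * y + 2"
proof -
  have A: "nn * a = -(nn+1) * b" using L by (simp add: algebra_simps eq_neg_iff_add_eq_0)
  define c where "c = (nn+1)\<^sup>2 + nn\<^sup>2"
  define N where "N = nn\<^sup>2 + nn"
  have sq: "nn\<^sup>2 * a\<^sup>2 = (nn+1)\<^sup>2 * b\<^sup>2" proof -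
    have "nn\<^sup>2 * a\<^sup>2 = (nn * a)\<^sup>2" by (simp add: power_mult_distrib)
    also have "\<dots> = (nn+1)\<^sup>2 * b\<^sup>2" unfolding A by (simp add: power_mult_distrib power2_eq_square algebra_simps)
    finally show ?thesis .
  qed
  have ab: "nn\<^sup>2 * (a * b) = - N * b\<^sup>2"
  proof -
    have "nn\<^sup>2 * (a * b) = (nn * a) * (nn * b)" by (simp add: power2_eq_square algebra_simps)
    also have "\<dots> = - N * b\<^sup>2" unfolding A N_def by (simp add: power2_eq_square algebra_simps)
    finally show ?thesis .
  qed
  have K2: "b\<^sup>2 * (c + z * N) = nn\<^sup>2"
  proof -
    have "nn\<^sup>2 * (a\<^sup>2 + b\<^sup>2 - z * a * b) = nn\<^sup>2" using K by simp
    moreover have "nn\<^sup>2 * (a\<^sup>2 + b\<^sup>2 - z * a * b) = nn\<^sup>2 * a\<^sup>2 + nn\<^sup>2 * b\<^sup>2 - z * (nn\<^sup>2 * (a * b))"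
      by (simp add: algebra_simps)
    moreover have "b\<^sup>2 * (c + z * N) = nn\<^sup>2 * a\<^sup>2 + nn\<^sup>2 * b\<^sup>2 - z * (nn\<^sup>2 * (a * b))"
      unfolding sq ab c_def by (simp add: algebra_simps)
    ultimately show ?thesis by simp
  qed
  have V2: "b\<^sup>2 * ((x*y - z) * c + (x\<^sup>2 + y\<^sup>2 - 4) * N) = -2 * nn\<^sup>2"
  proof -
    have e: "(x * a - y * b) * (y * a - x * b) - z * (a\<^sup>2 + b\<^sup>2) + 4 * a * b
        = (x*y - z) * (a\<^sup>2 + b\<^sup>2) - (x\<^sup>2 + y\<^sup>2 - 4) * (a * b)"
      by (simp add: power2_eq_square algebra_simps)
    have "nn\<^sup>2 * ((x*y - z) * (a\<^sup>2 + b\<^sup>2) - (x\<^sup>2 + y\<^sup>2 - 4) * (a * b)) = -2 * nn\<^sup>2"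
      using V e by simp
    moreover have "nn\<^sup>2 * ((x*y - z) * (a\<^sup>2 + b\<^sup>2) - (x\<^sup>2 + y\<^sup>2 - 4) * (a * b))
       = (x*y - z) * (nn\<^sup>2 * a\<^sup>2 + nn\<^sup>2 * b\<^sup>2) - (x\<^sup>2 + y\<^sup>2 - 4) * (nn\<^sup>2 * (a * b))"
      by (simp add: algebra_simps)
    moreover have "b\<^sup>2 * ((x*y - z) * c + (x\<^sup>2 + y\<^sup>2 - 4) * N) = (x*y - z) * (nn\<^sup>2 * a\<^sup>2 + nn\<^sup>2 * b\<^sup>2) - (x\<^sup>2 + y\<^sup>2 - 4) * (nn\<^sup>2 * (a * b))"
      unfolding sq ab c_def by (simp add: algebra_simps)
    ultimately show ?thesis by simp
  qed
  have bnz: "b\<^sup>2 \<noteq> 0" using K2 nz by auto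
  have "b\<^sup>2 * ((x*y - z) * c + (x\<^sup>2 + y\<^sup>2 - 4) * N + 2 * (c + z * N)) = 0"
  proof -
    have "b\<^sup>2 * ((x*y - z) * c + (x\<^sup>2 + y\<^sup>2 - 4) * N + 2 * (c + z * N))
       = b\<^sup>2 * ((x*y - z) * c + (x\<^sup>2 + y\<^sup>2 - 4) * N) + 2 * (b\<^sup>2 * (c + z * N))"
      by (simp add: algebra_simps)
    also have "\<dots> = 0" unfolding K2 V2 by simp
    finally show ?thesis .
  qed
  then have E: "(x*y - z) * c + (x\<^sup>2 + y\<^sup>2 - 4) * N + 2 * (c + z * N) = 0" using bnz by simp
  have cN: "c = 2 * N + 1" unfolding c_def N_def by (simp add: power2_eq_square algebra_simps)
  have "z = (x*y) * c + (x\<^sup>2 + y\<^sup>2 - 4) * N + 2 * c"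
  proof -
    have "(x*y - z) * c + (x\<^sup>2 + y\<^sup>2 - 4) * N + 2 * (c + z * N)
        = ((x*y) * c + (x\<^sup>2 + y\<^sup>2 - 4) * N + 2 * c) - z * (c - 2 * N)"
      by (simp add: algebra_simps)
    with E cN show ?thesis by simp
  qed
  also have "\<dots> = N * (x + y)\<^sup>2 + x * y + 2" unfolding cN
    by (simp add: power2_eq_square algebra_simps)
  finally show ?thesis unfolding N_def .
qed

theorem lemma4p14:
  fixes m n :: nat
  assumes "m \<ge> 1" and "n \<ge> 1"
  shows "(\<forall>x y z. vpoly m x y z = -2 \<and>
            of_nat n * cheb m z + of_nat (n + 1) * cheb (m - 1) z = 0 \<longrightarrow>
            z = of_nat (n\<^sup>2 + n) * (x + y)\<^sup>2 + x * y + 2)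
       \<and> (\<forall>z. vpoly m 2 2 z = -2 \<and>
            of_nat n * cheb m z + of_nat (n + 1) * cheb (m - 1) z = 0 \<longrightarrow>
            z \<in> \<real>)"
proof -
  obtain k where mk: "m = Suc k" using assms(1) by (cases m) auto
  have P1: "\<forall>x y z. vpoly m x y z = -2 \<and>
            of_nat n * cheb m z + of_nat (n + 1) * cheb (m - 1) z = 0 \<longrightarrow>
            z = of_nat (n\<^sup>2 + n) * (x + y)\<^sup>2 + x * y + 2"
  proof (intro allI impI)
    fix x y z :: complex
    assume h: "vpoly m x y z = -2 \<and>
            of_nat n * cheb m z + of_nat (n + 1) * cheb (m - 1) z = 0"
    have "z = (of_nat n ^ 2 + of_nat n) * (x + y)\<^sup>2 + x * y + 2"
      apply (rule core[where a = "cheb m z" and b = "cheb (m-1) z"])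
      using cassini[of k z] h assms(2) unfolding mk vpoly_def by (auto simp: add.commute)
    then show "z = of_nat (n\<^sup>2 + n) * (x + y)\<^sup>2 + x * y + 2" by simp
  qed
  show ?thesis
  proof
    show "\<forall>x y z. vpoly m x y z = -2 \<and> of_nat n * cheb m z + of_nat (n + 1) * cheb (m - 1) z = 0 \<longrightarrow> z = of_nat (n\<^sup>2 + n) * (x + y)\<^sup>2 + x * y + 2" using P1 by blast
  next
    show "\<forall>z. vpoly m 2 2 z = -2 \<and>
            of_nat n * cheb m z + of_nat (n + 1) * cheb (m - 1) z = 0 \<longrightarrow> z \<in> \<real>"
    proof (intro allI impI)
      fix z :: complex
      assume h: "vpoly m 2 2 z = -2 \<and>
            of_nat n * cheb m z + of_nat (n + 1) * cheb (m - 1) z = 0"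
      then have "z = of_nat (n\<^sup>2 + n) * (2 + 2)\<^sup>2 + 2 * 2 + 2" using P1 by blast
      also have "\<dots> = of_real (real (n\<^sup>2 + n) * 16 + 6)" by simp
      finally show "z \<in> \<real>" by simp
    qed
  qed
qed

end
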